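(* Let $X$ be a minimal shift space over $\mathcal{A}$ such that the extension graph $\mathcal{E}_X(\varepsilon)$ of the empty word is connected. Then $X$ has a bispecial letter, i.e., a letter $a\in\mathcal{A}$ that is both left special and right special.
   Context: A shift space over a finite alphabet $\mathcal{A}$ ($|\mathcal{A}|\ge2$) is a nonempty closed shift-invariant $X\subseteq\mathcal{A}^{\mathbb{Z}}$ whose language $\mathcal{L}(X)$ contains every letter; it is minimal if it has no nonempty proper closed shift-invariant subset. For $w\in\mathcal{L}(X)$, $E^L_X(w)=\{a:aw\in\mathcal{L}(X)\}$, $E^R_X(w)=\{b:wb\in\mathcal{L}(X)\}$; $w$ is left special if $|E^L_X(w)|\ge2$, right special if $|E^R_X(w)|\ge2$. $\mathcal{E}_X(w)$ is the bipartite graph on the disjoint union of $\{a^L:a\in E^L_X(w)\}$ and $\{b^R:b\in E^R_X(w)\}$ with an edge $\{a^L,b^R\}$ whenever $awb\in\mathcal{L}(X)$. *)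

theory Defs
  imports Main
begin

text \<open>Bi-infinite sequences over a finite alphabet 'a (the alphabet is the whole type).\<close>

definition shift :: "(int \<Rightarrow> 'a) \<Rightarrow> (int \<Rightarrow> 'a)" where
  "shift x = (\<lambda>i. x (i + 1))"

text \<open>Closedness in the product topology of discrete topologies, written out via
  central cylinders: the complement is open.\<close>
definition closed_seqs :: "(int \<Rightarrow> 'a) set \<Rightarrow> bool" where
  "closed_seqs X \<longleftrightarrow> (\<forall>x. x \<notin> X \<longrightarrow>
     (\<exists>n::nat. \<forall>y. (\<forall>i. \<bar>i\<bar> \<le> int n \<longrightarrow> y i = x i) \<longrightarrow> y \<notin> X))"

definition shift_invariant :: "(int \<Rightarrow> 'a) set \<Rightarrow> bool" where
  "shift_invariant X \<longleftrightarrow> shift ` X = X"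

definition language :: "(int \<Rightarrow> 'a) set \<Rightarrow> 'a list set" where
  "language X = {w. \<exists>x\<in>X. \<exists>i::int. w = map (\<lambda>k. x (i + int k)) [0..<length w]}"

definition shift_space :: "(int \<Rightarrow> 'a) set \<Rightarrow> bool" where
  "shift_space X \<longleftrightarrow> X \<noteq> {} \<and> closed_seqs X \<and> shift_invariant X
     \<and> (\<forall>a. [a] \<in> language X)"

definition minimal_shift :: "(int \<Rightarrow> 'a) set \<Rightarrow> bool" where
  "minimal_shift X \<longleftrightarrow> shift_space X \<and>
     (\<forall>Y. Y \<subseteq> X \<and> Y \<noteq> {} \<and> closed_seqs Y \<and> shift_invariant Y \<longrightarrow> Y = X)"

definition ext_left :: "(int \<Rightarrow> 'a) set \<Rightarrow> 'a list \<Rightarrow> 'a set" where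
  "ext_left X w = {a. a # w \<in> language X}"

definition ext_right :: "(int \<Rightarrow> 'a) set \<Rightarrow> 'a list \<Rightarrow> 'a set" where
  "ext_right X w = {b. w @ [b] \<in> language X}"

definition left_special :: "(int \<Rightarrow> 'a) set \<Rightarrow> 'a list \<Rightarrow> bool" where
  "left_special X w \<longleftrightarrow> card (ext_left X w) \<ge> 2"

definition right_special :: "(int \<Rightarrow> 'a) set \<Rightarrow> 'a list \<Rightarrow> bool" where
  "right_special X w \<longleftrightarrow> card (ext_right X w) \<ge> 2"

text \<open>Extension graph: vertices Inl a (a left extension) and Inr b (b right extension),
  undirected edges {Inl a, Inr b} whenever a w b is in the language.\<close>
definition ext_graph_vertices :: "(int \<Rightarrow> 'a) set \<Rightarrow> 'a list \<Rightarrow> ('a + 'a) set" where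
  "ext_graph_vertices X w = Inl ` ext_left X w \<union> Inr ` ext_right X w"

definition ext_graph_edges :: "(int \<Rightarrow> 'a) set \<Rightarrow> 'a list \<Rightarrow> ('a + 'a) rel" where
  "ext_graph_edges X w =
     {(Inl a, Inr b) | a b. a # w @ [b] \<in> language X}
   \<union> {(Inr b, Inl a) | a b. a # w @ [b] \<in> language X}"

definition ext_graph_connected :: "(int \<Rightarrow> 'a) set \<Rightarrow> 'a list \<Rightarrow> bool" where
  "ext_graph_connected X w \<longleftrightarrow>
     (\<forall>u\<in>ext_graph_vertices X w. \<forall>v\<in>ext_graph_vertices X w.
        (u, v) \<in> (ext_graph_edges X w)\<^sup>*)"

end

theory Submission
  imports Defs "HOL-Library.Infinite_Set"
begin

lemma card2_iff: "finite A \<Longrightarrow> 2 \<le> card A \<longleftrightarrow> (\<exists>x y. x \<in> A \<and> y \<in> A \<and> x \<noteq> y)"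
proof
  assume f: "finite A" and c: "2 \<le> card A"
  then obtain x where x: "x \<in> A" by fastforce
  have "card (A - {x}) \<ge> 1" using c x f by simp
  then have "A - {x} \<noteq> {}" by (metis card.empty not_one_le_zero)
  then obtain y where "y \<in> A - {x}" by blast
  then show "\<exists>x y. x \<in> A \<and> y \<in> A \<and> x \<noteq> y" using x by blast
next
  assume f: "finite A" and "\<exists>x y. x \<in> A \<and> y \<in> A \<and> x \<noteq> y"
  then obtain x y where "x \<in> A" "y \<in> A" "x \<noteq> y" by blast
  then have "card {x,y} \<le> card A" using f by (intro card_mono) auto
  then show "2 \<le> card A" using \<open>x \<noteq> y\<close> by simp
qed

lemma lang2: "[a,b] \<in> language X \<longleftrightarrow> (\<exists>x\<in>X. \<exists>i. x i = a \<and> x (i+1) = b)"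
  by (auto simp: language_def numeral_2_eq_2 upt_rec)

lemma lang1: "[a] \<in> language X \<longleftrightarrow> (\<exists>x\<in>X. \<exists>i. x i = a)"
  by (auto simp: language_def upt_rec)

lemma shift_fwd: "shift_invariant X \<Longrightarrow> y \<in> X \<Longrightarrow> (\<lambda>i. y (i+1)) \<in> X"
  unfolding shift_invariant_def shift_def by blast

lemma shift_back: assumes "shift_invariant X" "y \<in> X" shows "(\<lambda>i. y (i - 1)) \<in> X"
proof -
  from assms have "y \<in> shift ` X" unfolding shift_invariant_def by simp
  then obtain z where z: "z \<in> X" "y = shift z" by blast
  have "z = (\<lambda>i. y (i - 1))" using z(2) by (auto simp: shift_def)
  then show ?thesis using z(1) by simp
qed

lemma shift_int: assumes si: "shift_invariant X" and y: "y \<in> X" shows "(\<lambda>i. y (i + c)) \<in> X"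
proof (induction c rule: int_induct[where k=0])
  case base then show ?case using y by simp
next
  case (step1 i)
  from shift_fwd[OF si step1(2)] show ?case by (simp add: ac_simps)
next
  case (step2 i)
  from shift_back[OF si step2(2)] show ?case by (simp add: algebra_simps)
qed

definition win :: "(int \<Rightarrow> 'a) \<Rightarrow> nat \<Rightarrow> nat \<Rightarrow> 'a list" where
  "win x n k = map (\<lambda>j. x (int k + int j - int n)) [0..<2*n+1]"

lemma win_len: "length (win x n k) = 2*n+1" by (simp add: win_def)

lemma win_nth: "j < 2*n+1 \<Longrightarrow> win x n k ! j = x (int k + int j - int n)"
  by (simp add: win_def del: upt_Suc)

lemma win_mono: assumes "win x (Suc n) k = win x (Suc n) k'" shows "win x n k = win x n k'"
proof (rule nth_equalityI)
  show "length (win x n k) = length (win x n k')" by (simp add: win_len)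
next
  fix j assume "j < length (win x n k)"
  then have j: "j < 2*n+1" by (simp add: win_len)
  have "win x n k ! j = win x (Suc n) k ! Suc j" using j by (simp add: win_nth algebra_simps)
  also have "\<dots> = win x (Suc n) k' ! Suc j" using assms by simp
  also have "\<dots> = win x n k' ! j" using j by (simp add: win_nth algebra_simps)
  finally show "win x n k ! j = win x n k' ! j" .
qed

lemma win_le: "m \<le> n \<Longrightarrow> win x n k = win x n k' \<Longrightarrow> win x m k = win x m k'"
  by (induction n rule: dec_induct) (auto intro: win_mono)

lemma win_pt: assumes "win x m k = win x m k'" "\<bar>i\<bar> \<le> int m"
  shows "x (i + int k) = x (i + int k')"
proof -
  define j where "j = nat (int m + i)"
  have j: "j < 2*m+1" "int j = int m + i" using assms(2) by (auto simp: j_def)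
  have "win x m k ! j = win x m k' ! j" using assms(1) by simp
  then show ?thesis using j by (simp add: win_nth algebra_simps)
qed

lemma pigeon: fixes x :: "int \<Rightarrow> 'a::finite"
  assumes "infinite K" shows "\<exists>w. infinite {k\<in>K. win x n k = w}"
proof (rule ccontr)
  assume "\<not> ?thesis"
  then have fin: "\<forall>w. finite {k\<in>K. win x n k = w}" by blast
  have "range (win x n) \<subseteq> {xs. set xs \<subseteq> UNIV \<and> length xs = 2*n+1}" by (auto simp: win_len)
  moreover have "finite {xs. set xs \<subseteq> (UNIV::'a set) \<and> length xs = 2*n+1}"
    by (rule finite_lists_length_eq) simp
  ultimately have fr: "finite (range (win x n))" by (rule finite_subset)
  have "K = (\<Union>w\<in>range (win x n). {k\<in>K. win x n k = w})" by auto
  moreover have "finite (\<Union>w\<in>range (win x n). {k\<in>K. win x n k = w})"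
    using fr fin by blast
  ultimately show False using assms by simp
qed

fun ws :: "(int \<Rightarrow> 'a::finite) \<Rightarrow> nat \<Rightarrow> 'a list" where
  "ws x 0 = (SOME w. infinite {k. win x 0 k = w})"
| "ws x (Suc n) = (SOME w. infinite {k. win x n k = ws x n \<and> win x (Suc n) k = w})"

lemma ws_next: "infinite {k. win x n k = ws x n} \<Longrightarrow>
  infinite {k. win x n k = ws x n \<and> win x (Suc n) k = ws x (Suc n)}"
proof -
  assume a: "infinite {k. win x n k = ws x n}"
  obtain w where "infinite {k\<in>{k. win x n k = ws x n}. win x (Suc n) k = w}"
    using pigeon[OF a] by blast
  then have "\<exists>w. infinite {k. win x n k = ws x n \<and> win x (Suc n) k = w}" by auto
  then show ?thesis unfolding ws.simps(2) by (rule someI_ex)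
qed

lemma ws_inf: "infinite {k. win x n k = ws x n}"
proof (induction n)
  case 0
  obtain w where "infinite {k\<in>(UNIV::nat set). win x 0 k = w}" using pigeon[of UNIV] by blast
  then have "\<exists>w. infinite {k. win x 0 k = w}" by auto
  then show ?case unfolding ws.simps(1) by (rule someI_ex)
next
  case (Suc n)
  have "infinite {k. win x n k = ws x n \<and> win x (Suc n) k = ws x (Suc n)}"
    by (rule ws_next[OF Suc])
  moreover have "{k. win x n k = ws x n \<and> win x (Suc n) k = ws x (Suc n)}
      \<subseteq> {k. win x (Suc n) k = ws x (Suc n)}" by (intro Collect_mono impI) (erule conjunct2)
  ultimately show ?case by (rule infinite_super[rotated])
qed

lemma ws_step: "win x (Suc n) k = ws x (Suc n) \<Longrightarrow> win x n k = ws x n"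
proof -
  assume a: "win x (Suc n) k = ws x (Suc n)"
  have "infinite {k. win x n k = ws x n \<and> win x (Suc n) k = ws x (Suc n)}"
    by (rule ws_next[OF ws_inf])
  then obtain k' where k': "win x n k' = ws x n" "win x (Suc n) k' = ws x (Suc n)"
    using not_finite_existsD by blast
  have "win x n k = win x n k'" by (rule win_mono[of x n k k']) (use a k'(2) in simp)
  then show ?thesis using k'(1) by simp
qed

lemma ws_le: "m \<le> n \<Longrightarrow> win x n k = ws x n \<Longrightarrow> win x m k = ws x m"
  apply (induction n rule: dec_induct)
   apply simp
  apply (metis ws_step)
  done

lemma compact_aux: fixes x :: "int \<Rightarrow> 'a::finite"
  shows "\<exists>z. \<forall>n::nat. \<exists>k::nat. k \<ge> n \<and> (\<forall>i. \<bar>i\<bar> \<le> int n \<longrightarrow> z i = x (i + int k))"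
proof -
  define kk where "kk m = (SOME k. win x m k = ws x m)" for m
  have kk: "win x m (kk m) = ws x m" for m
    unfolding kk_def using not_finite_existsD[OF ws_inf] by (rule someI_ex)
  define z where "z i = x (i + int (kk (nat \<bar>i\<bar>)))" for i
  have "\<exists>k::nat. k \<ge> n \<and> (\<forall>i. \<bar>i\<bar> \<le> int n \<longrightarrow> z i = x (i + int k))" for n
  proof -
    obtain k where k: "k \<ge> n" "win x n k = ws x n"
      using ws_inf[of x n] unfolding infinite_nat_iff_unbounded_le by blast
    have "z i = x (i + int k)" if i: "\<bar>i\<bar> \<le> int n" for i
    proof -
      have "win x (nat \<bar>i\<bar>) k = ws x (nat \<bar>i\<bar>)" by (rule ws_le[of "nat \<bar>i\<bar>" n]) (use i k(2) in auto)
      then have "win x (nat \<bar>i\<bar>) k = win x (nat \<bar>i\<bar>) (kk (nat \<bar>i\<bar>))" using kk by simp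
      then have "x (i + int k) = x (i + int (kk (nat \<bar>i\<bar>)))" by (rule win_pt) (use i in auto)
      then show ?thesis unfolding z_def by simp
    qed
    then show ?thesis using k(1) by blast
  qed
  then show ?thesis by blast
qed

lemma minS:
  fixes X :: "(int \<Rightarrow> 'a::finite) set"
  assumes mX: "minimal_shift X" and ne: "S \<noteq> {}"
    and cS: "\<forall>a b. a \<in> S \<longrightarrow> [a,b] \<in> language X \<longrightarrow> b \<in> S"
  shows "S = UNIV"
proof -
  have cl: "closed_seqs X" and si: "shift_invariant X" and lt: "\<forall>a. [a] \<in> language X"
    and mn: "\<forall>Y. Y \<subseteq> X \<and> Y \<noteq> {} \<and> closed_seqs Y \<and> shift_invariant Y \<longrightarrow> Y = X"
    using mX by (auto simp: minimal_shift_def shift_space_def)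
  obtain a where a: "a \<in> S" using ne by blast
  obtain y i where y: "y \<in> X" "y i = a" using lt lang1 by metis
  define x where "x = (\<lambda>j. y (j + i))"
  have xX: "x \<in> X" unfolding x_def using shift_int[OF si y(1)] .
  have xS: "x (int j) \<in> S" for j
  proof (induction j)
    case 0 then show ?case using a y by (simp add: x_def)
  next
    case (Suc j)
    have "[x (int j), x (int (Suc j))] \<in> language X" using xX unfolding lang2
      by (metis of_nat_Suc add.commute)
    then show ?case using cS Suc by blast
  qed
  obtain z where z: "\<forall>n::nat. \<exists>k::nat. k \<ge> n \<and> (\<forall>i. \<bar>i\<bar> \<le> int n \<longrightarrow> z i = x (i + int k))"
    using compact_aux by blast
  have zX: "z \<in> X"
  proof (rule ccontr)
    assume "z \<notin> X"
    then obtain n where n: "\<forall>y. (\<forall>i. \<bar>i\<bar> \<le> int n \<longrightarrow> y i = z i) \<longrightarrow> y \<notin> X"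
      using cl unfolding closed_seqs_def by blast
    obtain k where k: "\<forall>i. \<bar>i\<bar> \<le> int n \<longrightarrow> z i = x (i + int k)" using z by blast
    have "(\<lambda>i. x (i + int k)) \<in> X" using shift_int[OF si xX] .
    then show False using n k by auto
  qed
  have zS: "z i \<in> S" for i
  proof -
    obtain k where k: "k \<ge> nat \<bar>i\<bar>" "\<forall>j. \<bar>j\<bar> \<le> int (nat \<bar>i\<bar>) \<longrightarrow> z j = x (j + int k)"
      using z by blast
    then have e: "z i = x (i + int k)" by auto
    have "i + int k = int (nat (i + int k))" using k(1) by linarith
    then show ?thesis using xS e by metis
  qed
  define Y where "Y = {y\<in>X. \<forall>i. y i \<in> S}"
  have "Y \<subseteq> X" unfolding Y_def by blast
  moreover have "Y \<noteq> {}" using zX zS unfolding Y_def by blast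
  moreover have "closed_seqs Y"
    unfolding closed_seqs_def
  proof (intro allI impI)
    fix y assume "y \<notin> Y"
    then consider "y \<notin> X" | i where "y i \<notin> S" unfolding Y_def by blast
    then show "\<exists>n::nat. \<forall>y'. (\<forall>i. \<bar>i\<bar> \<le> int n \<longrightarrow> y' i = y i) \<longrightarrow> y' \<notin> Y"
    proof cases
      case 1
      then obtain n where "\<forall>y'. (\<forall>i. \<bar>i\<bar> \<le> int n \<longrightarrow> y' i = y i) \<longrightarrow> y' \<notin> X"
        using cl unfolding closed_seqs_def by blast
      then show ?thesis unfolding Y_def by blast
    next
      case (2 i)
      show ?thesis
      proof (intro exI allI impI)
        fix y' assume "\<forall>j. \<bar>j\<bar> \<le> int (nat \<bar>i\<bar>) \<longrightarrow> y' j = y j"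
        then have "y' i = y i" by simp
        show "y' \<notin> Y"
        proof
          assume "y' \<in> Y"
          then have "y' i \<in> S" by (simp add: Y_def)
          with \<open>y' i = y i\<close> 2 show False by simp
        qed
      qed
    qed
  qed
  moreover have "shift_invariant Y"
    unfolding shift_invariant_def
  proof
    show "shift ` Y \<subseteq> Y"
      using shift_fwd[OF si] by (auto simp: Y_def shift_def)
  next
    show "Y \<subseteq> shift ` Y"
    proof
      fix y assume y: "y \<in> Y"
      have "(\<lambda>i. y (i - 1)) \<in> Y" using y shift_back[OF si] by (auto simp: Y_def)
      moreover have "y = shift (\<lambda>i. y (i - 1))" by (simp add: shift_def)
      ultimately show "y \<in> shift ` Y" by blast
    qed
  qed
  ultimately have YX: "Y = X" using mn by blast
  show ?thesis
  proof
    show "UNIV \<subseteq> S"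
    proof
      fix c :: 'a
      obtain y i where "y \<in> X" "y i = c" using lt lang1 by metis
      then show "c \<in> S" using YX unfolding Y_def by blast
    qed
  qed simp
qed

lemma count_contra:
  fixes R :: "'a::finite \<Rightarrow> 'a \<Rightarrow> bool"
  assumes "\<forall>a. \<exists>b. R a b" "\<forall>b. \<exists>a. R a b" "\<forall>a b b'. R a b \<longrightarrow> R a b' \<longrightarrow> b = b'"
    "R a b" "R a' b" "a \<noteq> a'"
  shows False
proof -
  define f where "f a = (SOME b. R a b)" for a
  have f: "R a (f a)" for a unfolding f_def using assms(1) by (metis someI_ex)
  have fe: "R a b \<Longrightarrow> f a = b" for a b using f assms(3) by blast
  have "UNIV \<subseteq> f ` UNIV"
  proof
    fix b :: 'a obtain a where "R a b" using assms(2) by blast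
    then show "b \<in> f ` UNIV" using fe by blast
  qed
  then have "inj f" using finite_surj_inj[of "UNIV::'a set" f] by simp
  moreover have "f a = f a'" using fe assms(4,5) by simp
  ultimately show False using assms(6) by (simp add: inj_eq)
qed

theorem mainTheorem13:
  fixes X :: "(int \<Rightarrow> 'a::finite) set"
  assumes "card (UNIV :: 'a set) \<ge> 2"
    and "minimal_shift X"
    and "ext_graph_connected X []"
  shows "\<exists>a. left_special X [a] \<and> right_special X [a]"
proof (rule ccontr)
  assume nb: "\<not> ?thesis"
  have si: "shift_invariant X" and lt: "\<forall>a. [a] \<in> language X"
    using assms(2) by (auto simp: minimal_shift_def shift_space_def)
  have succ_ex: "\<exists>b. [a,b] \<in> language X" for a
  proof -
    obtain y i where "y \<in> X" "y i = a" using lt lang1 by metis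
    then show ?thesis by (auto simp: lang2)
  qed
  have pred_ex: "\<exists>a. [a,b] \<in> language X" for b
  proof -
    obtain y i where "y \<in> X" "y i = b" using lt lang1 by metis
    then have "y (i - 1) = y (i - 1) \<and> y (i - 1 + 1) = b" by simp
    then show ?thesis using \<open>y \<in> X\<close> unfolding lang2 by blast
  qed
  define Ls where "Ls = {b. \<exists>a a'. a \<noteq> a' \<and> [a,b] \<in> language X \<and> [a',b] \<in> language X}"
  define Rs where "Rs = {a. \<exists>b b'. b \<noteq> b' \<and> [a,b] \<in> language X \<and> [a,b'] \<in> language X}"
  have lsp: "left_special X [b] \<longleftrightarrow> b \<in> Ls" for b
    unfolding left_special_def Ls_def ext_left_def by (subst card2_iff) auto
  have rsp: "right_special X [a] \<longleftrightarrow> a \<in> Rs" for a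
    unfolding right_special_def Rs_def ext_right_def by (subst card2_iff) auto
  have disj: "\<not> (a \<in> Ls \<and> a \<in> Rs)" for a using nb lsp rsp by blast
  have key: "a \<in> Rs \<or> b \<in> Ls" if ab: "[a,b] \<in> language X" for a b
  proof (rule ccontr)
    assume "\<not> (a \<in> Rs \<or> b \<in> Ls)"
    then have ua: "\<forall>b'. [a,b'] \<in> language X \<longrightarrow> b' = b"
      and ub: "\<forall>a'. [a',b] \<in> language X \<longrightarrow> a' = a"
      using ab unfolding Rs_def Ls_def by blast+
    obtain c :: 'a where c: "c \<noteq> a"
    proof -
      have "UNIV \<noteq> {a}"
      proof
        assume "UNIV = {a}"
        then have "card (UNIV::'a set) = card {a}" by (simp only:)
        then have "card (UNIV::'a set) = 1" by simp
        with assms(1) show False by simp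
      qed
      then show ?thesis using that by blast
    qed
    have "ext_left X [] = UNIV" "ext_right X [] = UNIV"
      using lt by (auto simp: ext_left_def ext_right_def)
    then have V: "ext_graph_vertices X [] = UNIV"
      unfolding ext_graph_vertices_def using UNIV_Plus_UNIV by (simp add: Plus_def)
    have "(Inl a, Inl c) \<in> (ext_graph_edges X [])\<^sup>*"
      using assms(3) V unfolding ext_graph_connected_def by blast
    then have "Inl c \<in> {Inl a, Inr b}"
    proof (induction rule: rtrancl_induct)
      case base then show ?case by simp
    next
      case (step v w)
      then show ?case using ua ub by (auto simp: ext_graph_edges_def)
    qed
    then show False using c by simp
  qed
  show False
  proof (cases "Ls = {}")
    case True
    then have allR: "a \<in> Rs" for a using key succ_ex by blast
    have nL: "b \<notin> Ls" for b using True by blast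
    have fun1: "\<forall>b a a'. [a,b] \<in> language X \<longrightarrow> [a',b] \<in> language X \<longrightarrow> a = a'"
    proof (intro allI impI)
      fix b a a' assume "[a,b] \<in> language X" "[a',b] \<in> language X"
      then show "a = a'" using nL[of b] unfolding Ls_def by blast
    qed
    obtain b b' where bb: "b \<noteq> b'" "[undefined,b] \<in> language X" "[undefined,b'] \<in> language X"
      using allR[of undefined] unfolding Rs_def by blast
    show False
      by (rule count_contra[of "\<lambda>b a. [a,b] \<in> language X" b undefined b'])
        (use pred_ex succ_ex fun1 bb in auto)
  next
    case False
    have cl: "\<forall>a b. a \<in> Ls \<longrightarrow> [a,b] \<in> language X \<longrightarrow> b \<in> Ls"
    proof (intro allI impI)
      fix a b assume "a \<in> Ls" "[a,b] \<in> language X"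
      then show "b \<in> Ls" using key[of a b] disj[of a] by blast
    qed
    have "Ls = UNIV" by (rule minS[OF assms(2) False cl])
    then have nR: "a \<notin> Rs" for a using disj by blast
    have fun2: "\<forall>a b b'. [a,b] \<in> language X \<longrightarrow> [a,b'] \<in> language X \<longrightarrow> b = b'"
    proof (intro allI impI)
      fix a b b' assume "[a,b] \<in> language X" "[a,b'] \<in> language X"
      then show "b = b'" using nR[of a] unfolding Rs_def by blast
    qed
    have "undefined \<in> Ls" using \<open>Ls = UNIV\<close> by simp
    then obtain a a' where aa: "a \<noteq> a'" "[a,undefined] \<in> language X" "[a',undefined] \<in> language X"
      unfolding Ls_def by blast
    show False
      by (rule count_contra[of "\<lambda>a b. [a,b] \<in> language X" a undefined a'])
        (use pred_ex succ_ex fun2 aa in auto)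
  qed
qed

end
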